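(* There is an absolute constant $C_8$ such that for all $p\in(0,0.1)$, the number of good sequences of rectangles (over all lengths $n\ge1$) is at most $$\exp\Big[\frac{C_8}{\sqrt q}(\log q^{-1})^2\Big].$$
   Context: $q=-\log(1-p)$, $A=\lceil 1/\sqrt q\rceil$, $B=\lfloor q^{-1}\log q^{-1}\rfloor$. A rectangle is $\{a,\dots,c\}\times\{b,\dots,d\}\subset\mathbb{Z}^2$ with dimensions $(c-a+1,d-b+1)$. A sequence of rectangles $R_1,\dots,R_{n+1}$ ($n\ge1$) with $\dim(R_i)=(a_i,b_i)$, $s_i=a_{i+1}-a_i$, $t_i=b_{i+1}-b_i$ is good if: (i) $(0,0)\in R_1\subseteq\dots\subseteq R_{n+1}$; (ii) $\min(a_1,b_1)\in[A,A+3]$; (iii) $a_n+b_n\le B$; (iv) $a_{n+1}+b_{n+1}>B$; (v) for $i=1,\dots,n$, $s_i\ge a_i\sqrt q$ or $t_i\ge b_i\sqrt q$; (vi) for $i=1,\dots,n$, $s_i<a_i\sqrt q+4$ and $t_i<b_i\sqrt q+4$. *)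

theory Defs
  imports Complex_Main
begin

type_synonym rect = "int \<times> int \<times> int \<times> int"

definition rect_set :: "rect \<Rightarrow> (int \<times> int) set" where
  "rect_set R = (case R of (a, b, c, d) \<Rightarrow> {a..c} \<times> {b..d})"

definition is_rect :: "rect \<Rightarrow> bool" where
  "is_rect R = (case R of (a, b, c, d) \<Rightarrow> a \<le> c \<and> b \<le> d)"

definition dimx :: "rect \<Rightarrow> int" where
  "dimx R = (case R of (a, b, c, d) \<Rightarrow> c - a + 1)"

definition dimy :: "rect \<Rightarrow> int" where
  "dimy R = (case R of (a, b, c, d) \<Rightarrow> d - b + 1)"

definition qpar :: "real \<Rightarrow> real" where
  "qpar p = - ln (1 - p)"

definition Apar :: "real \<Rightarrow> int" where
  "Apar p = \<lceil>1 / sqrt (qpar p)\<rceil>"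

definition Bpar :: "real \<Rightarrow> int" where
  "Bpar p = \<lfloor>(1 / qpar p) * ln (1 / qpar p)\<rfloor>"

text \<open>Good sequences R_1,...,R_{n+1} (n \<ge> 1), stored as a list of length n+1
  (list index i corresponds to R_{i+1}).\<close>

definition good_seq :: "real \<Rightarrow> rect list \<Rightarrow> bool" where
  "good_seq p Rs \<longleftrightarrow>
     (let n = length Rs - 1; q = qpar p; A = Apar p; B = Bpar p;
          a = (\<lambda>i. dimx (Rs ! i)); b = (\<lambda>i. dimy (Rs ! i)) in
      length Rs \<ge> 2 \<and>
      (\<forall>i < length Rs. is_rect (Rs ! i)) \<and>
      (0, 0) \<in> rect_set (Rs ! 0) \<and>
      (\<forall>i < n. rect_set (Rs ! i) \<subseteq> rect_set (Rs ! (i + 1))) \<and>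
      A \<le> min (a 0) (b 0) \<and> min (a 0) (b 0) \<le> A + 3 \<and>
      a (n - 1) + b (n - 1) \<le> B \<and>
      a n + b n > B \<and>
      (\<forall>i < n. real_of_int (a (i + 1) - a i) \<ge> real_of_int (a i) * sqrt q
             \<or> real_of_int (b (i + 1) - b i) \<ge> real_of_int (b i) * sqrt q) \<and>
      (\<forall>i < n. real_of_int (a (i + 1) - a i) < real_of_int (a i) * sqrt q + 4
             \<and> real_of_int (b (i + 1) - b i) < real_of_int (b i) * sqrt q + 4))"

definition good_seqs :: "real \<Rightarrow> rect list set" where
  "good_seqs p = {Rs. good_seq p Rs}"

end

theory Submission
  imports Defs
begin

lemma rect_dims: "is_rect R \<Longrightarrow> dimx R \<ge> 1 \<and> dimy R \<ge> 1"
  by (cases R) (auto simp: is_rect_def dimx_def dimy_def)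

lemma rect_sub:
  assumes "is_rect (a,b,c,d)" "rect_set (a,b,c,d) \<subseteq> rect_set (a',b',c',d')"
  shows "a' \<le> a \<and> c \<le> c' \<and> b' \<le> b \<and> d \<le> d'"
proof -
  have "(a,b) \<in> rect_set (a,b,c,d)" "(c,d) \<in> rect_set (a,b,c,d)"
    using assms(1) by (auto simp: is_rect_def rect_set_def)
  then have "(a,b) \<in> rect_set (a',b',c',d')" "(c,d) \<in> rect_set (a',b',c',d')" using assms(2) by auto
  then show ?thesis by (auto simp: rect_set_def)
qed

lemma rect_sub_dims:
  assumes "is_rect R" "rect_set R \<subseteq> rect_set R'"
  shows "dimx R \<le> dimx R' \<and> dimy R \<le> dimy R'"
  using rect_sub[of "fst R" "fst (snd R)" "fst (snd (snd R))" "snd (snd (snd R))"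
     "fst R'" "fst (snd R')" "fst (snd (snd R'))" "snd (snd (snd R'))"] assms
  by (cases R; cases R') (auto simp: dimx_def dimy_def)

lemma chain_sub:
  fixes f :: "nat \<Rightarrow> 'a set" and i j n :: nat
  assumes "\<forall>i<n. f i \<subseteq> f (i+1)"
  shows "i \<le> j \<Longrightarrow> j \<le> n \<Longrightarrow> f i \<subseteq> f j"
proof (induction j)
  case 0 then show ?case by simp
next
  case (Suc j)
  show ?case
  proof (cases "i = Suc j")
    case False
    then have "f i \<subseteq> f j" using Suc by auto
    also have "f j \<subseteq> f (Suc j)" using assms Suc.prems by auto
    finally show ?thesis .
  qed simp
qed

definition SS :: "int \<Rightarrow> rect set" where
  "SS D = {-D..D} \<times> {-D..D} \<times> {-D..D} \<times> {-D..D}"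

lemma in_SS:
  assumes "is_rect R" "is_rect R'" "(0,0) \<in> rect_set R" "rect_set R \<subseteq> rect_set R'"
    "dimx R' \<le> D" "dimy R' \<le> D"
  shows "R \<in> SS D"
proof -
  obtain a b c d where R: "R = (a,b,c,d)" by (cases R) auto
  obtain a' b' c' d' where R': "R' = (a',b',c',d')" by (cases R') auto
  have 1: "a' \<le> a \<and> c \<le> c' \<and> b' \<le> b \<and> d \<le> d'" using rect_sub assms R R' by blast
  have 2: "a \<le> 0 \<and> 0 \<le> c \<and> b \<le> 0 \<and> 0 \<le> d" using assms(3) R by (auto simp: rect_set_def)
  have 3: "c' - a' + 1 \<le> D \<and> d' - b' + 1 \<le> D" using assms(5,6) R' by (auto simp: dimx_def dimy_def)
  show ?thesis using 1 2 3 R assms(1) by (auto simp: SS_def is_rect_def)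
qed

lemma good_main:
  assumes g: "good_seq p Rs" and s: "s = sqrt (qpar p)" "0 < s" "s \<le> 1/2"
  shows "real (length Rs - 2) * (s/2) \<le> 2 * ln (real_of_int (Bpar p))"
    and "set Rs \<subseteq> SS (2 * Bpar p + 4)"
    and "Bpar p \<ge> 2"
proof -
  define n where "n = length Rs - 1"
  define a where "a = (\<lambda>i. dimx (Rs!i))"
  define b where "b = (\<lambda>i. dimy (Rs!i))"
  define B where "B = Bpar p"
  have L: "length Rs \<ge> 2" and rect: "\<forall>i<length Rs. is_rect (Rs!i)"
    and z: "(0,0) \<in> rect_set (Rs!0)"
    and nest: "\<forall>i<n. rect_set (Rs!i) \<subseteq> rect_set (Rs!(i+1))"
    and Bn1: "a (n-1) + b (n-1) \<le> B"
    and grow: "\<forall>i<n. real_of_int (a (i + 1) - a i) \<ge> real_of_int (a i) * s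
             \<or> real_of_int (b (i + 1) - b i) \<ge> real_of_int (b i) * s"
    and up: "\<forall>i<n. real_of_int (a (i + 1) - a i) < real_of_int (a i) * s + 4
             \<and> real_of_int (b (i + 1) - b i) < real_of_int (b i) * s + 4"
    using g unfolding good_seq_def Let_def n_def a_def b_def B_def s(1) by auto
  have n1: "n \<ge> 1" "length Rs = n + 1" using L n_def by auto
  have pos: "a i \<ge> 1 \<and> b i \<ge> 1" if "i \<le> n" for i
    using rect_dims[of "Rs!i"] rect that n1 a_def b_def by auto
  have mono: "a i \<le> a (i+1) \<and> b i \<le> b (i+1)" if "i < n" for i
    using rect_sub_dims[of "Rs!i" "Rs!(i+1)"] rect nest that n1 a_def b_def by auto
  have prod: "(1+s) * real_of_int (a i * b i) \<le> real_of_int (a (i+1) * b (i+1))" if i: "i < n" for i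
  proof -
    have ai: "real_of_int (a i) \<ge> 1" "real_of_int (b i) \<ge> 1" using pos[of i] i by auto
    have m: "real_of_int (a i) \<le> a (i+1)" "real_of_int (b i) \<le> b (i+1)" using mono[OF i] by auto
    from grow i consider "real_of_int (a (i+1)) \<ge> (1+s) * a i" | "real_of_int (b (i+1)) \<ge> (1+s) * b i"
      by (force simp: algebra_simps)
    then show ?thesis
    proof cases
      case 1
      have "(1+s) * real_of_int (a i * b i) = ((1+s) * a i) * b i" by simp
      also have "\<dots> \<le> real_of_int (a (i+1)) * real_of_int (b (i+1))" using 1 m ai s(2) by (intro mult_mono) auto
      finally show ?thesis by simp
    next
      case 2
      have "(1+s) * real_of_int (a i * b i) = a i * ((1+s) * b i)" by simp
      also have "\<dots> \<le> real_of_int (a (i+1)) * real_of_int (b (i+1))" using 2 m ai s(2) by (intro mult_mono) auto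
      finally show ?thesis by simp
    qed
  qed
  have ind: "i < n \<Longrightarrow> (1+s)^i \<le> real_of_int (a i * b i)" for i
  proof (induction i)
    case 0
    have "(1::int) * 1 \<le> a 0 * b 0" using pos[of 0] by (intro mult_mono) auto
    then show ?case by (simp flip: of_int_mult)
  next
    case (Suc i)
    then have "(1+s)^(Suc i) \<le> (1+s) * real_of_int (a i * b i)" using s(2) by simp
    also have "\<dots> \<le> real_of_int (a (Suc i) * b (Suc i))" using prod[of i] Suc by simp
    finally show ?case .
  qed
  have pn: "a (n-1) \<ge> 1" "b (n-1) \<ge> 1" using pos[of "n-1"] by auto
  have B2: "B \<ge> 2" using Bn1 pn by simp
  then show "Bpar p \<ge> 2" using B_def by simp
  have "(1+s)^(n-1) \<le> real_of_int (a (n-1) * b (n-1))" using ind[of "n-1"] n1 by simp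
  also have "\<dots> \<le> real_of_int B * real_of_int B"
  proof -
    have "a (n-1) * b (n-1) \<le> B * B" using Bn1 pn by (intro mult_mono) auto
    then show ?thesis by (simp flip: of_int_mult)
  qed
  finally have pw: "(1+s)^(n-1) \<le> real_of_int B * real_of_int B" .
  have "ln ((1+s)^(n-1)) \<le> ln (real_of_int B * real_of_int B)"
    using pw s(2) B2 by (subst ln_le_cancel_iff) auto
  then have "real (n-1) * ln (1+s) \<le> 2 * ln (real_of_int B)"
    using B2 s(2) by (simp add: ln_realpow ln_mult)
  moreover have "s/2 \<le> ln (1+s)"
  proof -
    have "s - s^2 \<le> ln (1+s)" using s(2,3) by (intro ln_one_plus_pos_lower_bound) auto
    moreover have "s*s \<le> s*(1/2)" using s(2,3) by (intro mult_left_mono) auto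
    then have "s^2 \<le> s/2" by (simp add: power2_eq_square)
    ultimately show ?thesis by simp
  qed
  ultimately have "real (n-1) * (s/2) \<le> 2 * ln (real_of_int B)"
    by (meson mult_left_mono of_nat_0_le_iff order_trans)
  then show "real (length Rs - 2) * (s/2) \<le> 2 * ln (real_of_int (Bpar p))"
    using n1 B_def by (simp add: numeral_2_eq_2)
  have an: "a n \<le> 2 * B + 4" "b n \<le> 2 * B + 4"
  proof -
    have u: "real_of_int (a n - a (n-1)) < real_of_int (a (n-1)) * s + 4"
      "real_of_int (b n - b (n-1)) < real_of_int (b (n-1)) * s + 4"
      using up[rule_format, of "n-1"] n1 by auto
    have "real_of_int (a (n-1)) * s \<le> a (n-1)" "real_of_int (b (n-1)) * s \<le> b (n-1)"
      using pn s(2,3) by (auto intro: mult_left_le)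
    then have "a n - a (n-1) < a (n-1) + 4" "b n - b (n-1) < b (n-1) + 4" using u by linarith+
    then show "a n \<le> 2 * B + 4" "b n \<le> 2 * B + 4" using Bn1 pn by linarith+
  qed
  show "set Rs \<subseteq> SS (2 * Bpar p + 4)"
  proof
    fix R assume "R \<in> set Rs"
    then obtain j where j: "j < length Rs" "R = Rs!j" by (auto simp: in_set_conv_nth)
    have c: "rect_set (Rs!i) \<subseteq> rect_set (Rs!k)" if "i \<le> k" "k \<le> n" for i k
      using chain_sub[of n "\<lambda>i. rect_set (Rs!i)", OF nest] that by auto
    have "(0,0) \<in> rect_set (Rs!j)" using c[of 0 j] z j n1 by auto
    then show "R \<in> SS (2 * Bpar p + 4)"
      using in_SS[of "Rs!j" "Rs!n" "2 * Bpar p + 4"] c[of j n] rect j n1 an a_def b_def B_def by auto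
  qed
qed

lemma card_SS: "D \<ge> 0 \<Longrightarrow> card (SS D) = nat (2*D+1)^4"
  by (simp add: SS_def card_cartesian_product power4_eq_xxxx)

lemma sum_pow_le: "(K::nat) \<ge> 1 \<Longrightarrow> (\<Sum>i\<le>M. K^i) \<le> (M+1) * K^M"
proof -
  assume K: "K \<ge> 1"
  have "(\<Sum>i\<le>M. K^i) \<le> (\<Sum>i\<le>M. K^M)" using K by (intro sum_mono power_increasing) auto
  then show ?thesis by simp
qed

theorem lemma14:
  shows "\<exists>C8::real. \<forall>p::real. 0 < p \<and> p < 0.1 \<longrightarrow>
           finite (good_seqs p) \<and>
           real (card (good_seqs p)) \<le> exp (C8 / sqrt (qpar p) * (ln (1 / qpar p))^2)"
proof (intro exI allI impI conjI)
  fix p :: real assume p: "0 < p \<and> p < 0.1"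
  define q where "q = qpar p"
  define s where "s = sqrt q"
  define X where "X = 1 / q"
  define L where "L = ln X"
  define B where "B = Bpar p"
  have q0: "0 < q" unfolding q_def qpar_def using p by simp
  have "ln (1/(1-p)) \<le> 1/(1-p) - 1" using p by (intro ln_le_minus_one) auto
  then have "q \<le> p/(1-p)" using p unfolding q_def qpar_def by (simp add: ln_div field_simps)
  also have "\<dots> < 1/9" using p by (simp add: field_simps)
  finally have q1: "q < 1/9" .
  have s0: "0 < s" using q0 s_def by simp
  have s1: "s \<le> 1/3"
  proof -
    have "sqrt q \<le> sqrt (1/9)" using q1 by simp
    also have "sqrt (1/9) = 1/3" by (simp add: real_sqrt_divide)
    finally show ?thesis using s_def by simp
  qed
  have X9: "X \<ge> 9" using q0 q1 X_def by (simp add: le_divide_eq)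
  have L1: "L \<ge> 1"
  proof -
    have "exp 1 \<le> X" using exp_le X9 by linarith
    then have "ln (exp 1) \<le> ln X" using X9 by (subst ln_le_cancel_iff) auto
    then show ?thesis unfolding L_def by simp
  qed
  have LX: "L \<le> X" unfolding L_def using X9 ln_le_minus_one[of X] by simp
  have XL: "X * L \<ge> 9" using X9 L1 mult_mono[of 9 X 1 L] by simp
  have Bdef: "B = \<lfloor>X * L\<rfloor>" unfolding B_def Bpar_def X_def L_def q_def by simp
  have B0: "B \<ge> 0" using XL Bdef by linarith
  have BX: "real_of_int B \<le> X * X"
  proof -
    have "real_of_int B \<le> X * L" using Bdef by linarith
    also have "\<dots> \<le> X * X" using LX X9 by (intro mult_left_mono) auto
    finally show ?thesis .
  qed
  define D where "D = 2 * B + 4"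
  define K where "K = card (SS D)"
  have D0: "D \<ge> 0" using B0 D_def by simp
  have KK: "real K = (4 * real_of_int B + 9)^4" unfolding K_def using card_SS[OF D0] D_def B0 by (simp add: add.commute)
  have "real K \<ge> 1" unfolding KK using B0 by (intro one_le_power) simp
  then have K1: "K \<ge> 1" by simp
  have "4 * real_of_int B + 9 \<le> 4 * (X * X) + 9" using BX by simp
  also have "\<dots> \<le> X * X * (X * X)"
  proof -
    have "81 \<le> X * X" using X9 mult_mono[of 9 X 9 X] by simp
    then have "81 * (X * X) \<le> (X*X) * (X*X)" by (intro mult_right_mono) auto
    then show ?thesis using \<open>81 \<le> X * X\<close> by simp
  qed
  finally have KX0: "4 * real_of_int B + 9 \<le> X * X * (X * X)" .
  have KX: "real K \<le> X ^ 16"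
  proof -
    have "real K \<le> (X * X * (X * X))^4" unfolding KK using KX0 B0 by (intro power_mono) auto
    also have "\<dots> = X^16" by (simp add: power_mult_distrib flip: power_mult power2_eq_square) 
    finally show ?thesis .
  qed
  define M where "M = nat \<lfloor>8 * L / s + 2\<rfloor>"
  have sub: "good_seqs p \<subseteq> {xs. set xs \<subseteq> SS D \<and> length xs \<le> M}"
  proof
    fix Rs assume "Rs \<in> good_seqs p"
    then have g: "good_seq p Rs" by (simp add: good_seqs_def)
    have sq: "s = sqrt (qpar p)" "0 < s" "s \<le> 1/2" using s_def q_def s0 s1 by auto
    note gm = good_main[OF g sq]
    have B2: "real_of_int (Bpar p) \<le> X * X" using BX B_def by simp
    have "ln (real_of_int (Bpar p)) \<le> ln (X * X)" using B2 gm(3) by (subst ln_le_cancel_iff) auto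
    also have "\<dots> = 2 * L" using X9 L_def by (simp add: ln_mult)
    finally have "real (length Rs - 2) * (s/2) \<le> 4 * L" using gm(1) by simp
    then have "real (length Rs - 2) \<le> 8 * L / s" using s0 by (simp add: field_simps)
    then have "real (length Rs) \<le> 8 * L / s + 2" by linarith
    then have "length Rs \<le> M" unfolding M_def by linarith
    then show "Rs \<in> {xs. set xs \<subseteq> SS D \<and> length xs \<le> M}" using gm(2) D_def B_def by simp
  qed
  have finS: "finite (SS D)" by (simp add: SS_def)
  have fin: "finite {xs. set xs \<subseteq> SS D \<and> length xs \<le> M}" by (rule finite_lists_length_le[OF finS])
  then show "finite (good_seqs p)" using sub finite_subset by blast
  have "card (good_seqs p) \<le> card {xs. set xs \<subseteq> SS D \<and> length xs \<le> M}" using card_mono[OF fin sub] .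
  also have "\<dots> = (\<Sum>i\<le>M. K^i)" using card_lists_length_le[OF finS] K_def by simp
  also have "\<dots> \<le> (M+1) * K^M" using sum_pow_le[OF K1] .
  finally have "real (card (good_seqs p)) \<le> real ((M+1) * K^M)" by (simp only: of_nat_le_iff)
  then have c1: "real (card (good_seqs p)) \<le> real (M+1) * real K ^ M" by (simp add: algebra_simps)
  have LS: "L / s \<ge> 3" using L1 s0 s1 by (simp add: field_simps) 
  have M1: "real (M+1) \<le> 9 * L / s"
  proof -
    have "real M \<le> 8 * L / s + 2" unfolding M_def using s0 L1 by (simp add: divide_nonneg_pos)
    moreover have "9*L/s = 8*L/s + L/s" by (simp add: add_divide_distrib[symmetric])
    ultimately show ?thesis using LS by simp
  qed
  have "real K ^ M \<le> (X^16)^M" using KX by (intro power_mono) auto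
  also have "\<dots> = X^(16*M)" by (simp add: power_mult)
  also have "\<dots> = exp (ln (X^(16*M)))" using X9 by simp
  also have "\<dots> = exp (real M * (16 * L))" unfolding L_def using X9 by (simp add: ln_realpow)
  finally have c2: "real K ^ M \<le> exp (real M * (16 * L))" .
  have c3: "real (M+1) \<le> exp (real (M+1))" using exp_ge_add_one_self[of "real (M+1)"] by linarith
  have "real (card (good_seqs p)) \<le> exp (real (M+1)) * exp (real M * (16 * L))"
    using c1 c2 c3 by (meson mult_mono order_trans of_nat_0_le_iff zero_le_power exp_ge_zero)
  also have "\<dots> = exp (real (M+1) + real M * (16 * L))" by (simp add: exp_add)
  also have "\<dots> \<le> exp (200 / s * L^2)"
  proof -
    have a: "real (M+1) \<le> 9 * L / s * L" using M1 mult_left_mono[of 1 L "9*L/s"] L1 s0 by simp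
    have b: "real M * (16 * L) \<le> (9 * L / s) * (16 * L)" using M1 L1 by (intro mult_right_mono) auto
    have "9 * L / s * L + (9 * L / s) * (16 * L) \<le> 200 / s * L^2"
      using s0 L1 by (simp add: field_simps power2_eq_square)
    then show ?thesis using a b by simp
  qed
  finally show "real (card (good_seqs p)) \<le> exp (200 / sqrt (qpar p) * (ln (1 / qpar p))^2)"
    using s_def q_def L_def X_def by simp
qed

end
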